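(* Let $A$ be a local commutative ring and $N$ its nilradical. Then $A$ is an fqp-ring if and only if either $A$ is a chain ring, or $A/N$ is a valuation domain and $N$ is an $A/N$-module (i.e. $N^2=0$) which is divisible and torsionfree over $A/N$.
   Context: An $A$-module $V$ is $M$-projective if the natural map $\mathrm{Hom}_A(V,M)\to\mathrm{Hom}_A(V,M/X)$ is surjective for every submodule $X$ of $M$; $V$ is quasi-projective if it is $V$-projective. A ring is an fqp-ring if every finitely generated ideal is quasi-projective. A chain ring is a ring whose ideals are totally ordered by inclusion. *)

theory Defs
  imports Main
begin

text \<open>Throughout, A is the commutative ring given by a type of class comm_ring_1.
  Ideals of A are regarded as A-modules (the scalar action is ring multiplication).\<close>

definition is_ideal :: "'a::comm_ring_1 set \<Rightarrow> bool" where
  "is_ideal I \<longleftrightarrow> 0 \<in> I \<and> (\<forall>x\<in>I. \<forall>y\<in>I. x + y \<in> I) \<and> (\<forall>a. \<forall>x\<in>I. a * x \<in> I)"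

definition maximal_ideal :: "'a::comm_ring_1 set \<Rightarrow> bool" where
  "maximal_ideal M \<longleftrightarrow> is_ideal M \<and> M \<noteq> UNIV \<and>
     (\<forall>J. is_ideal J \<and> M \<subseteq> J \<longrightarrow> J = M \<or> J = UNIV)"

definition local_ring :: "'a::comm_ring_1 itself \<Rightarrow> bool" where
  "local_ring _ \<longleftrightarrow> (\<exists>!M::'a set. maximal_ideal M)"

definition fg_ideal :: "'a::comm_ring_1 set \<Rightarrow> bool" where
  "fg_ideal I \<longleftrightarrow> (\<exists>S. finite S \<and> I = {\<Sum>s\<in>S. c s * s | c. True})"

definition submodule :: "'a::comm_ring_1 set \<Rightarrow> 'a set \<Rightarrow> bool" where
  "submodule X M \<longleftrightarrow> X \<subseteq> M \<and> is_ideal X"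

text \<open>A-linear maps V \<rightarrow> M (functions considered on V only).\<close>
definition linear_map :: "'a::comm_ring_1 set \<Rightarrow> 'a set \<Rightarrow> ('a \<Rightarrow> 'a) \<Rightarrow> bool" where
  "linear_map V M h \<longleftrightarrow> (\<forall>v\<in>V. h v \<in> M) \<and>
     (\<forall>a b. \<forall>v\<in>V. \<forall>w\<in>V. h (a * v + b * w) = a * h v + b * h w)"

text \<open>An A-linear map V \<rightarrow> M/X, represented by a choice of representatives
  g : V \<rightarrow> M (every A-linear map V \<rightarrow> M/X arises this way).\<close>
definition linear_map_mod :: "'a::comm_ring_1 set \<Rightarrow> 'a set \<Rightarrow> 'a set \<Rightarrow> ('a \<Rightarrow> 'a) \<Rightarrow> bool" where
  "linear_map_mod V M X g \<longleftrightarrow> (\<forall>v\<in>V. g v \<in> M) \<and>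
     (\<forall>a b. \<forall>v\<in>V. \<forall>w\<in>V. g (a * v + b * w) - (a * g v + b * g w) \<in> X)"

text \<open>V is M-projective: Hom(V,M) \<rightarrow> Hom(V,M/X) is surjective for every submodule X of M.\<close>
definition rel_projective :: "'a::comm_ring_1 set \<Rightarrow> 'a set \<Rightarrow> bool" where
  "rel_projective V M \<longleftrightarrow> (\<forall>X g. submodule X M \<and> linear_map_mod V M X g \<longrightarrow>
     (\<exists>h. linear_map V M h \<and> (\<forall>v\<in>V. h v - g v \<in> X)))"

definition quasi_projective :: "'a::comm_ring_1 set \<Rightarrow> bool" where
  "quasi_projective V \<longleftrightarrow> rel_projective V V"

definition fqp_ring :: "'a::comm_ring_1 itself \<Rightarrow> bool" where
  "fqp_ring _ \<longleftrightarrow> (\<forall>I::'a set. is_ideal I \<and> fg_ideal I \<longrightarrow> quasi_projective I)"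

definition chain_ring :: "'a::comm_ring_1 itself \<Rightarrow> bool" where
  "chain_ring _ \<longleftrightarrow> (\<forall>I J::'a set. is_ideal I \<and> is_ideal J \<longrightarrow> I \<subseteq> J \<or> J \<subseteq> I)"

definition nilradical :: "'a::comm_ring_1 set" where
  "nilradical = {x. \<exists>n. x ^ n = 0}"

text \<open>A/N is a valuation domain, for an ideal N, expressed on representatives:
  A/N is an integral domain (N is a proper ideal and prime) and for all residue
  classes one divides the other.\<close>
definition quotient_valuation_domain :: "'a::comm_ring_1 set \<Rightarrow> bool" where
  "quotient_valuation_domain N \<longleftrightarrow> is_ideal N \<and> (1::'a) \<notin> N \<and>
     (\<forall>x y. x * y \<in> N \<longrightarrow> x \<in> N \<or> y \<in> N) \<and>
     (\<forall>x y. (\<exists>c. y - c * x \<in> N) \<or> (\<exists>c. x - c * y \<in> N))"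

definition divisible_over_quotient :: "'a::comm_ring_1 set \<Rightarrow> bool" where
  "divisible_over_quotient N \<longleftrightarrow> (\<forall>r. r \<notin> N \<longrightarrow> (\<forall>x\<in>N. \<exists>y\<in>N. x = r * y))"

definition torsionfree_over_quotient :: "'a::comm_ring_1 set \<Rightarrow> bool" where
  "torsionfree_over_quotient N \<longleftrightarrow> (\<forall>r. \<forall>x\<in>N. r \<notin> N \<and> r * x = 0 \<longrightarrow> x = 0)"

end

theory Submission
  imports Defs
begin


definition gspan :: "'a::comm_ring_1 set \<Rightarrow> 'a set" where
  "gspan S = {\<Sum>s\<in>S. c s * s | c. True}"

lemma fg_ideal_iff: "fg_ideal I \<longleftrightarrow> (\<exists>S. finite S \<and> I = gspan S)"
  unfolding fg_ideal_def gspan_def by simp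

lemma ideal_sum:
  assumes "is_ideal J" "\<forall>s\<in>S. f s \<in> J" shows "sum f S \<in> J"
proof (cases "finite S")
  case True
  then show ?thesis using assms(2)
  proof (induction S rule: finite_induct)
    case empty then show ?case using assms(1) by (simp add: is_ideal_def)
  next
    case (insert x F) then show ?case using assms(1) by (simp add: is_ideal_def)
  qed
next
  case False then show ?thesis using assms(1) by (simp add: is_ideal_def)
qed

lemma gspan_ideal: "is_ideal (gspan S)"
  unfolding is_ideal_def gspan_def
proof (intro conjI ballI allI)
  show "0 \<in> {\<Sum>s\<in>S. c s * s |c. True}"
    by (rule CollectI, rule exI[of _ "\<lambda>_. 0"]) simp
next
  fix x y assume "x \<in> {\<Sum>s\<in>S. c s * s |c. True}" "y \<in> {\<Sum>s\<in>S. c s * s |c. True}"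
  then obtain c d where "x = (\<Sum>s\<in>S. c s * s)" "y = (\<Sum>s\<in>S. d s * s)" by auto
  then have "x + y = (\<Sum>s\<in>S. (c s + d s) * s)" by (simp add: sum.distrib distrib_right)
  then show "x + y \<in> {\<Sum>s\<in>S. c s * s |c. True}" by (auto intro!: exI[of _ "\<lambda>s. c s + d s"])
next
  fix a x assume "x \<in> {\<Sum>s\<in>S. c s * s |c. True}"
  then obtain c where "x = (\<Sum>s\<in>S. c s * s)" by auto
  then have "a * x = (\<Sum>s\<in>S. (a * c s) * s)" by (simp add: sum_distrib_left mult.assoc)
  then show "a * x \<in> {\<Sum>s\<in>S. c s * s |c. True}" by (auto intro!: exI[of _ "\<lambda>s. a * c s"])
qed

lemma gspan_mem: assumes "finite S" "s \<in> S" shows "s \<in> gspan S"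
proof -
  let ?c = "\<lambda>x. if x = s then 1 else 0"
  have "(\<Sum>x\<in>S. ?c x * x) = (\<Sum>x\<in>S. (if x = s then s else 0))"
    by (rule sum.cong) auto
  also have "\<dots> = s" using assms by (simp add: sum.delta)
  finally have eq: "s = (\<Sum>x\<in>S. ?c x * x)" by simp
  show ?thesis unfolding gspan_def mem_Collect_eq
    by (rule exI[where x="?c"]) (use eq in blast)
qed

lemma gspan_least: assumes "is_ideal J" "S \<subseteq> J" shows "gspan S \<subseteq> J"
proof
  fix x assume "x \<in> gspan S"
  then obtain c where "x = (\<Sum>s\<in>S. c s * s)" unfolding gspan_def by auto
  moreover have "\<forall>s\<in>S. c s * s \<in> J" using assms unfolding is_ideal_def by blast
  ultimately show "x \<in> J" using ideal_sum[OF assms(1)] by simp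
qed

lemma gspan_sub: "finite S \<Longrightarrow> S \<subseteq> gspan S"
  using gspan_mem by blast

lemma gspan_remove:
  assumes "finite S" "j \<in> S" "j \<in> gspan (S - {j})"
  shows "gspan (S - {j}) = gspan S"
proof
  show "gspan (S - {j}) \<subseteq> gspan S"
    using gspan_least[OF gspan_ideal, of "S - {j}" S] gspan_sub[OF assms(1)] by blast
  show "gspan S \<subseteq> gspan (S - {j})"
    apply (rule gspan_least[OF gspan_ideal])
    using gspan_sub[of "S - {j}"] assms by auto
qed

lemma gspan_single: "gspan {a} = {k * a | k. True}"
  unfolding gspan_def by auto

lemma gspan_pair: assumes "a \<noteq> b" shows "gspan {a, b} = {r * a + s * b | r s. True}"
proof
  show "gspan {a, b} \<subseteq> {r * a + s * b | r s. True}"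
  proof
    fix x assume "x \<in> gspan {a, b}"
    then obtain c where "x = (\<Sum>s\<in>{a,b}. c s * s)" unfolding gspan_def by auto
    then have "x = c a * a + c b * b" using assms by simp
    then show "x \<in> {r * a + s * b | r s. True}" by blast
  qed
  show "{r * a + s * b | r s. True} \<subseteq> gspan {a, b}"
  proof
    fix x assume "x \<in> {r * a + s * b | r s. True}"
    then obtain r s where x: "x = r * a + s * b" by blast
    let ?c = "\<lambda>y. if y = a then r else s"
    have "(\<Sum>y\<in>{a,b}. ?c y * y) = x" using assms x by simp
    then show "x \<in> gspan {a, b}" unfolding gspan_def by (auto intro!: exI[of _ ?c])
  qed
qed



lemma ideal_neg: "is_ideal J \<Longrightarrow> x \<in> J \<Longrightarrow> - x \<in> J"
  unfolding is_ideal_def by (metis mult_minus1)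

lemma ideal_diff: "is_ideal J \<Longrightarrow> x \<in> J \<Longrightarrow> y \<in> J \<Longrightarrow> x - y \<in> J"
  using ideal_neg[of J y] unfolding is_ideal_def by (metis diff_conv_add_uminus)

lemma ideal_add: "is_ideal J \<Longrightarrow> x \<in> J \<Longrightarrow> y \<in> J \<Longrightarrow> x + y \<in> J"
  unfolding is_ideal_def by blast

lemma ideal_mult: "is_ideal J \<Longrightarrow> x \<in> J \<Longrightarrow> a * x \<in> J"
  unfolding is_ideal_def by blast

lemma ideal_0: "is_ideal J \<Longrightarrow> 0 \<in> J"
  unfolding is_ideal_def by blast

lemma QP:
  assumes fin: "finite S" and I: "I = gspan S"
    and C: "\<forall>c t. (\<forall>s\<in>S. t s \<in> I) \<longrightarrow> (\<Sum>s\<in>S. c s * s) = 0 \<longrightarrow> (\<Sum>s\<in>S. c s * t s) = 0"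
  shows "quasi_projective I"
  unfolding quasi_projective_def rel_projective_def
proof (intro allI impI)
  fix X g assume a: "submodule X I \<and> linear_map_mod I I X g"
  have XI: "is_ideal X" "X \<subseteq> I" using a unfolding submodule_def by auto
  have gI: "\<And>v. v \<in> I \<Longrightarrow> g v \<in> I" using a unfolding linear_map_mod_def by auto
  have gm: "\<And>x y v w. v \<in> I \<Longrightarrow> w \<in> I \<Longrightarrow> g (x * v + y * w) - (x * g v + y * g w) \<in> X"
    using a unfolding linear_map_mod_def by auto
  have II: "is_ideal I" using I gspan_ideal by simp
  have SI: "S \<subseteq> I" using I gspan_sub[OF fin] by simp
  define co where "co v = (SOME c. v = (\<Sum>s\<in>S. c s * s))" for v
  have co: "v = (\<Sum>s\<in>S. co v s * s)" if "v \<in> I" for v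
  proof -
    have "\<exists>c. v = (\<Sum>s\<in>S. c s * s)" using that I unfolding gspan_def by auto
    then show ?thesis unfolding co_def by (rule someI_ex)
  qed
  define h where "h v = (\<Sum>s\<in>S. co v s * g s)" for v
  have gS: "\<forall>s\<in>S. g s \<in> I" using SI gI by auto
  have hI: "h v \<in> I" for v
    unfolding h_def by (rule ideal_sum[OF II]) (use gS II ideal_mult in blast)
  have lin: "h (x * v + y * w) = x * h v + y * h w" if "v \<in> I" "w \<in> I" for x y v w
  proof -
    define u where "u = x * v + y * w"
    have uI: "u \<in> I" unfolding u_def using that II by (simp add: ideal_add ideal_mult)
    define e where "e s = co u s - x * co v s - y * co w s" for s
    have "(\<Sum>s\<in>S. e s * s) = (\<Sum>s\<in>S. co u s * s) - x * (\<Sum>s\<in>S. co v s * s) - y * (\<Sum>s\<in>S. co w s * s)"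
    proof -
      have "(\<Sum>s\<in>S. e s * s) = (\<Sum>s\<in>S. co u s * s - x * (co v s * s) - y * (co w s * s))"
        by (rule sum.cong) (simp_all add: e_def algebra_simps)
      also have "\<dots> = (\<Sum>s\<in>S. co u s * s) - x * (\<Sum>s\<in>S. co v s * s) - y * (\<Sum>s\<in>S. co w s * s)"
        by (simp only: sum_subtractf sum_distrib_left)
      finally show ?thesis .
    qed
    also have "\<dots> = u - x * v - y * w" using co[OF uI, symmetric] co[OF that(1), symmetric] co[OF that(2), symmetric] by simp
    also have "\<dots> = 0" unfolding u_def by simp
    finally have "(\<Sum>s\<in>S. e s * g s) = 0" using C gS by blast
    moreover have "(\<Sum>s\<in>S. e s * g s) = h u - x * h v - y * h w"
    proof -
      have "(\<Sum>s\<in>S. e s * g s) = (\<Sum>s\<in>S. co u s * g s - x * (co v s * g s) - y * (co w s * g s))"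
        by (rule sum.cong) (simp_all add: e_def algebra_simps)
      also have "\<dots> = h u - x * h v - y * h w"
        by (simp only: sum_subtractf sum_distrib_left h_def)
      finally show ?thesis .
    qed
    ultimately have "h u - x * h v - y * h w = 0" by simp
    then show ?thesis unfolding u_def by (simp add: diff_diff_eq)
  qed
  have sub: "g (\<Sum>s\<in>F. c s * s) - (\<Sum>s\<in>F. c s * g s) \<in> X" if "F \<subseteq> S" for F c
  proof -
    have "finite F" using fin that finite_subset by blast
    then show ?thesis using that
    proof (induction F rule: finite_subset_induct')
      case empty
      have "g (0 * 0 + 0 * 0) - (0 * g 0 + 0 * g 0) \<in> X" by (rule gm[OF ideal_0[OF II] ideal_0[OF II]])
      then show ?case by simp
    next
      case (insert x F)
      define U where "U = (\<Sum>s\<in>F. c s * s)"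
      define W where "W = (\<Sum>s\<in>F. c s * g s)"
      have uI: "U \<in> I" unfolding U_def
        by (rule ideal_sum[OF II]) (use insert.hyps SI ideal_mult[OF II] in blast)
      have xI: "x \<in> I" using insert.hyps SI by blast
      have A1: "g (c x * x + 1 * U) - (c x * g x + 1 * g U) \<in> X"
        by (rule gm[OF xI uI])
      have A2: "g U - W \<in> X" using insert.IH unfolding U_def W_def .
      have M0: "(g (c x * x + 1 * U) - (c x * g x + 1 * g U)) + (g U - W) \<in> X"
        by (rule ideal_add[OF XI(1) A1 A2])
      have E0: "(g (c x * x + 1 * U) - (c x * g x + 1 * g U)) + (g U - W)
          = g (c x * x + U) - (c x * g x + W)" by simp
      have E1: "(\<Sum>s\<in>insert x F. c s * s) = c x * x + U" unfolding U_def using insert by simp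
      have E2: "(\<Sum>s\<in>insert x F. c s * g s) = c x * g x + W" unfolding W_def using insert by simp
      show ?case using M0 unfolding E0 E1 E2 .
    qed
  qed
  have "linear_map I I h" unfolding linear_map_def using hI lin by blast
  moreover have "\<forall>v\<in>I. h v - g v \<in> X"
  proof
    fix v assume vI: "v \<in> I"
    have "g v - h v \<in> X" using sub[of S "co v"] unfolding h_def co[OF vI, symmetric] by simp
    then have "- (g v - h v) \<in> X" using ideal_neg XI by blast
    then show "h v - g v \<in> X" by simp
  qed
  ultimately show "\<exists>h. linear_map I I h \<and> (\<forall>v\<in>I. h v - g v \<in> X)" by blast
qed



definition nuc :: "'a::comm_ring_1 itself \<Rightarrow> bool" where
  "nuc _ \<longleftrightarrow> (\<forall>x y::'a. \<not> x dvd 1 \<longrightarrow> \<not> y dvd 1 \<longrightarrow> \<not> (x + y) dvd 1)"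

lemma exists_max:
  fixes J :: "'a::comm_ring_1 set"
  assumes J: "is_ideal J" "1 \<notin> J"
  shows "\<exists>M. maximal_ideal M \<and> J \<subseteq> M"
proof -
  define A where "A = {I::'a set. is_ideal I \<and> J \<subseteq> I \<and> 1 \<notin> I}"
  have "\<forall>C\<in>chains A. \<exists>U\<in>A. \<forall>X\<in>C. X \<subseteq> U"
  proof
    fix C assume C: "C \<in> chains A"
    show "\<exists>U\<in>A. \<forall>X\<in>C. X \<subseteq> U"
    proof (cases "C = {}")
      case True then show ?thesis using J unfolding A_def by auto
    next
      case False
      have CA: "C \<subseteq> A" and ch: "\<forall>X\<in>C. \<forall>Y\<in>C. X \<subseteq> Y \<or> Y \<subseteq> X"
        using C unfolding chains_def chain_subset_def by auto
      have "is_ideal (\<Union>C)" unfolding is_ideal_def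
      proof (intro conjI ballI allI)
        show "0 \<in> \<Union>C" using False CA unfolding A_def is_ideal_def by blast
      next
        fix x y assume "x \<in> \<Union>C" "y \<in> \<Union>C"
        then obtain X Y where "X \<in> C" "Y \<in> C" "x \<in> X" "y \<in> Y" by blast
        moreover have "is_ideal X" "is_ideal Y" using CA \<open>X \<in> C\<close> \<open>Y \<in> C\<close> unfolding A_def by auto
        ultimately show "x + y \<in> \<Union>C" using ch unfolding is_ideal_def by blast
      next
        fix a x assume "x \<in> \<Union>C"
        then obtain X where "X \<in> C" "x \<in> X" by blast
        moreover have "is_ideal X" using CA \<open>X \<in> C\<close> unfolding A_def by auto
        ultimately show "a * x \<in> \<Union>C" unfolding is_ideal_def by blast
      qed
      moreover have "J \<subseteq> \<Union>C" using False CA unfolding A_def by blast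
      moreover have "1 \<notin> \<Union>C" using CA unfolding A_def by blast
      ultimately show ?thesis unfolding A_def by blast
    qed
  qed
  then obtain M where M: "M \<in> A" "\<forall>X\<in>A. M \<subseteq> X \<longrightarrow> X = M" by (rule Zorn_Lemma2[THEN bexE])
  have "maximal_ideal M" unfolding maximal_ideal_def
  proof (intro conjI allI impI)
    show "is_ideal M" using M unfolding A_def by auto
    show "M \<noteq> UNIV" using M unfolding A_def by auto
    fix K assume K: "is_ideal K \<and> M \<subseteq> K"
    show "K = M \<or> K = UNIV"
    proof (cases "1 \<in> K")
      case True
      then have "K = UNIV" using K unfolding is_ideal_def by (metis UNIV_eq_I mult_1_right)
      then show ?thesis by blast
    next
      case False
      then have "K \<in> A" using K M unfolding A_def by auto
      then show ?thesis using M K by blast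
    qed
  qed
  then show ?thesis using M unfolding A_def by blast
qed

lemma principal_ideal: "is_ideal {k * x | k. True}"
  unfolding is_ideal_def
proof (intro conjI ballI allI)
  show "0 \<in> {k * x | k. True}" by (auto intro!: exI[of _ 0])
next
  fix a b assume "a \<in> {k * x | k. True}" "b \<in> {k * x | k. True}"
  then obtain k l where "a = k * x" "b = l * x" by blast
  then have "a + b = (k + l) * x" by (simp add: distrib_right)
  then show "a + b \<in> {k * x | k. True}" by blast
next
  fix c a assume "a \<in> {k * x | k. True}"
  then obtain k where "a = k * x" by blast
  then have "c * a = (c * k) * x" by (simp add: mult.assoc)
  then show "c * a \<in> {k * x | k. True}" by blast
qed

lemma ideal_one_univ: "is_ideal K \<Longrightarrow> 1 \<in> K \<Longrightarrow> K = UNIV"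
proof -
  assume "is_ideal K" "1 \<in> K"
  then have "\<forall>z. z * 1 \<in> K" unfolding is_ideal_def by blast
  then show "K = UNIV" by auto
qed

lemma self_in_principal: "(x::'a::comm_ring_1) \<in> {k * x | k. True}"
proof -
  have "x = 1 * x \<and> True" by simp
  then show ?thesis by blast
qed

lemma local_nuc:
  assumes "local_ring TYPE('a::comm_ring_1)" shows "nuc TYPE('a)"
  unfolding nuc_def
proof (intro allI impI notI)
  fix x y :: 'a assume x: "\<not> x dvd 1" and y: "\<not> y dvd 1" and xy: "(x + y) dvd 1"
  have nx: "1 \<notin> {k * x | k. True}" using x by (auto simp: dvd_def mult.commute)
  have ny: "1 \<notin> {k * y | k. True}" using y by (auto simp: dvd_def mult.commute)
  obtain M1 where M1: "maximal_ideal M1" "{k * x | k. True} \<subseteq> M1"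
    using exists_max[OF principal_ideal nx] by blast
  obtain M2 where M2: "maximal_ideal M2" "{k * y | k. True} \<subseteq> M2"
    using exists_max[OF principal_ideal ny] by blast
  have "M1 = M2" using assms M1(1) M2(1) unfolding local_ring_def by blast
  have I1: "is_ideal M1" using M1(1) unfolding maximal_ideal_def by blast
  have "x \<in> M1" using M1(2) self_in_principal by blast
  moreover have "y \<in> M1" using M2(2) \<open>M1 = M2\<close> self_in_principal by blast
  ultimately have "x + y \<in> M1" using ideal_add[OF I1] by blast
  moreover obtain k where "1 = (x + y) * k" using xy by (auto simp: dvd_def)
  ultimately have "k * (x + y) \<in> M1" using ideal_mult[OF I1] by blast
  then have "1 \<in> M1" using \<open>1 = (x + y) * k\<close> by (simp add: mult.commute)
  then have "M1 = UNIV" using ideal_one_univ[OF I1] by blast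
  then show False using M1(1) unfolding maximal_ideal_def by blast
qed

lemma nuc_unit:
  assumes "nuc TYPE('a::comm_ring_1)" "\<not> (p::'a) dvd 1" shows "(1 + p) dvd 1"
proof (rule ccontr)
  assume "\<not> (1 + p) dvd 1"
  moreover have "\<not> (- p) dvd 1" using assms(2) by simp
  ultimately have "\<not> ((1 + p) + - p) dvd 1" using assms(1) unfolding nuc_def by blast
  then show False by simp
qed

lemma unit_cancel: assumes "(u::'a::comm_ring_1) dvd 1" "u * d = 0" shows "d = 0"
proof -
  obtain k where "1 = u * k" using assms(1) by (auto simp: dvd_def)
  then have "d = k * (u * d)" by (simp add: algebra_simps)
  then show ?thesis using assms(2) by simp
qed



definition cmp :: "'a::comm_ring_1 \<Rightarrow> 'a \<Rightarrow> bool" where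
  "cmp x y \<longleftrightarrow> (\<exists>k. y = k * x) \<or> (\<exists>k. x = k * y)"

lemma pair_decomp:
  fixes a b :: "'a::comm_ring_1"
  assumes "v = r1*a+s1*b" "w = r2*a+s2*b" "x*v+y*w = r3*a+s3*b"
  shows "(r3 - x*r1 - y*r2)*a = (x*s1 + y*s2 - s3)*b"
proof -
  have e: "r3*a + s3*b - (x*(r1*a+s1*b) + y*(r2*a+s2*b)) = 0" using assms by simp
  have "(r3 - x*r1 - y*r2)*a - (x*s1 + y*s2 - s3)*b = r3*a + s3*b - (x*(r1*a+s1*b) + y*(r2*a+s2*b))"
    by (simp add: algebra_simps)
  then show ?thesis using e by simp
qed

lemma fqp_pair:
  fixes a b :: "'a::comm_ring_1"
  assumes "fqp_ring TYPE('a)" "a \<noteq> b"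
  shows "rel_projective {r * a + s * b | r s. True} {r * a + s * b | r s. True}"
proof -
  have "is_ideal (gspan {a, b})" by (rule gspan_ideal)
  moreover have "fg_ideal (gspan {a, b})" unfolding fg_ideal_iff by (rule exI[of _ "{a,b}"]) simp
  ultimately have "quasi_projective (gspan {a, b})" using assms(1) unfolding fqp_ring_def by blast
  then show ?thesis unfolding quasi_projective_def gspan_pair[OF assms(2)] .
qed

lemma inc_neq: "\<not> cmp a b \<Longrightarrow> a \<noteq> b"
proof
  assume "\<not> cmp a b" "a = b"
  then have "b = 1 * a" by simp
  then show False using \<open>\<not> cmp a b\<close> unfolding cmp_def by blast
qed

lemma inc_nz: "\<not> cmp a b \<Longrightarrow> a \<noteq> 0"
proof
  assume "\<not> cmp a b" "a = 0"
  then have "a = 0 * b" by simp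
  then show False using \<open>\<not> cmp a b\<close> unfolding cmp_def by blast
qed

lemma cmp_sym: "cmp a b = cmp b a"
  unfolding cmp_def by blast



lemma inX: "d = p * a \<Longrightarrow> d = q * b \<Longrightarrow> d \<in> {d. \<exists>p q. d = p * a \<and> d = q * b}"
  by blast

lemma L1:
  fixes a b r s :: "'a::comm_ring_1"
  assumes N: "nuc TYPE('a)" and Q: "fqp_ring TYPE('a)" and inc: "\<not> cmp a b" and eq: "r * a = s * b"
  shows "r * a = 0"
proof -
  define I where "I = {r * a + s * b | r s. True}"
  have RP: "rel_projective I I" unfolding I_def by (rule fqp_pair[OF Q inc_neq[OF inc]])
  define X where "X = {d. \<exists>p q. d = p * a \<and> d = q * b}"
  have XI: "is_ideal X" unfolding is_ideal_def X_def
  proof (intro conjI ballI allI)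
    have "(0::'a) = 0 * a \<and> (0::'a) = 0 * b" by simp
    then show "0 \<in> {d. \<exists>p q. d = p * a \<and> d = q * b}" by blast
  next
    fix x y assume "x \<in> {d. \<exists>p q. d = p * a \<and> d = q * b}" "y \<in> {d. \<exists>p q. d = p * a \<and> d = q * b}"
    then obtain p q p' q' where "x = p * a" "x = q * b" "y = p' * a" "y = q' * b" by blast
    then have "x + y = (p + p') * a \<and> x + y = (q + q') * b" by (simp add: distrib_right)
    then show "x + y \<in> {d. \<exists>p q. d = p * a \<and> d = q * b}" by blast
  next
    fix c x assume "x \<in> {d. \<exists>p q. d = p * a \<and> d = q * b}"
    then obtain p q where "x = p * a" "x = q * b" by blast
    then have "c * x = (c * p) * a \<and> c * x = (c * q) * b" by (simp add: mult.assoc)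
    then show "c * x \<in> {d. \<exists>p q. d = p * a \<and> d = q * b}" by blast
  qed
  have XsI: "X \<subseteq> I"
  proof
    fix d assume "d \<in> X"
    then obtain p where "d = p * a" unfolding X_def by blast
    then have "d = p * a + 0 * b" by simp
    then show "d \<in> I" unfolding I_def by blast
  qed
  define co where "co v = (SOME pq. v = fst pq * a + snd pq * b)" for v
  have co: "v = fst (co v) * a + snd (co v) * b" if "v \<in> I" for v
  proof -
    from that obtain p q where "v = p * a + q * b" unfolding I_def by blast
    then have "\<exists>pq. v = fst pq * a + snd pq * b" by (intro exI[of _ "(p, q)"]) simp
    then show ?thesis unfolding co_def by (rule someI_ex)
  qed
  define g where "g v = fst (co v) * a" for v
  have II: "is_ideal I" unfolding I_def using gspan_ideal gspan_pair[OF inc_neq[OF inc]] by metis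
  have lmm: "linear_map_mod I I X g" unfolding linear_map_mod_def
  proof (intro conjI ballI allI)
    fix v assume "v \<in> I"
    have "g v = fst (co v) * a + 0 * b" unfolding g_def by simp
    then show "g v \<in> I" unfolding I_def by blast
  next
    fix x y v w assume vI: "v \<in> I" and wI: "w \<in> I"
    have uI: "x * v + y * w \<in> I" using II vI wI ideal_add ideal_mult by metis
    have d: "(fst (co (x * v + y * w)) - x * fst (co v) - y * fst (co w)) * a
          = (x * snd (co v) + y * snd (co w) - snd (co (x * v + y * w))) * b"
      by (rule pair_decomp[OF co[OF vI] co[OF wI] co[OF uI]])
    have e1: "g (x * v + y * w) - (x * g v + y * g w) = (fst (co (x * v + y * w)) - x * fst (co v) - y * fst (co w)) * a"
      unfolding g_def by (simp add: algebra_simps)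
    show "g (x * v + y * w) - (x * g v + y * g w) \<in> X" unfolding X_def
      by (rule inX[OF e1 trans[OF e1 d]])
  qed
  have "submodule X I" unfolding submodule_def using XI XsI by blast
  then obtain h where hl: "linear_map I I h" and hg: "\<forall>v\<in>I. h v - g v \<in> X"
    using RP lmm unfolding rel_projective_def by blast
  have aI: "a \<in> I" unfolding I_def by (rule CollectI, rule exI[of _ 1], rule exI[of _ 0], simp)
  have bI: "b \<in> I" unfolding I_def by (rule CollectI, rule exI[of _ 0], rule exI[of _ 1], simp)
  have hlin: "h (x * v + y * w) = x * h v + y * h w" if "v \<in> I" "w \<in> I" for x y v w
    using hl that unfolding linear_map_def by blast
  have ha: "h a - a \<in> X"
  proof -
    have e: "a = fst (co a) * a + snd (co a) * b" by (rule co[OF aI])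
    have "g a - a = (fst (co a) - 1) * a" unfolding g_def by (simp add: algebra_simps)
    moreover have "g a - a = (- snd (co a)) * b" unfolding g_def using e
      by (simp add: algebra_simps)
    ultimately have "g a - a \<in> X" unfolding X_def by (rule inX)
    then have "(h a - g a) + (g a - a) \<in> X" using hg aI ideal_add[OF XI] by blast
    then show ?thesis by simp
  qed
  have hb: "h b \<in> X"
  proof -
    have e: "b = fst (co b) * a + snd (co b) * b" by (rule co[OF bI])
    have "g b = fst (co b) * a" unfolding g_def by simp
    moreover have "g b = (1 - snd (co b)) * b" unfolding g_def using e
      by (simp add: algebra_simps)
    ultimately have "g b \<in> X" unfolding X_def by (rule inX)
    then have "(h b - g b) + g b \<in> X" using hg bI ideal_add[OF XI] by blast
    then show ?thesis by simp
  qed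
  obtain mu q where mu: "h a - a = mu * a" "h a - a = q * b" using ha unfolding X_def by blast
  obtain p nu where nu: "h b = p * a" "h b = nu * b" using hb unfolding X_def by blast
  have mun: "\<not> mu dvd 1"
  proof
    assume "mu dvd 1"
    then obtain k where k: "1 = mu * k" by (auto simp: dvd_def)
    have "a = k * (mu * a)" using k by (simp add: algebra_simps)
    also have "\<dots> = (k * q) * b" using mu by (simp add: mult.assoc)
    finally show False using inc unfolding cmp_def by blast
  qed
  have nun: "\<not> nu dvd 1"
  proof
    assume "nu dvd 1"
    then obtain k where k: "1 = nu * k" by (auto simp: dvd_def)
    have "b = k * (nu * b)" using k by (simp add: algebra_simps)
    also have "\<dots> = (k * p) * a" using nu by (simp add: mult.assoc)
    finally show False using inc unfolding cmp_def by blast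
  qed
  have h0: "h (r * a) = r * h a" using hlin[OF aI aI, of r 0] by simp
  have h1: "h (s * b) = s * h b" using hlin[OF bI bI, of s 0] by simp
  have "r * h a = s * h b" using h0 h1 eq by simp
  moreover have "h a = (1 + mu) * a" using mu(1) by (simp add: algebra_simps)
  ultimately have "r * ((1 + mu) * a) = s * (nu * b)" using nu(2) by simp
  then have "(1 + mu) * (r * a) = nu * (s * b)" by (simp add: algebra_simps)
  then have "(1 + mu) * (r * a) = nu * (r * a)" using eq by simp
  then have "(1 + (mu - nu)) * (r * a) = 0" by (simp add: algebra_simps)
  moreover have "\<not> (mu - nu) dvd 1"
  proof -
    have "\<not> (- nu) dvd 1" using nun by simp
    then have "\<not> (mu + - nu) dvd 1" using N mun unfolding nuc_def by blast
    then show ?thesis by simp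
  qed
  ultimately show ?thesis using nuc_unit[OF N] unit_cancel by blast
qed

lemma nonunit_mult: "\<not> (p::'a::comm_ring_1) dvd 1 \<Longrightarrow> \<not> (c * p) dvd 1"
  using dvd_mult_right by blast

lemma L2:
  fixes a b r :: "'a::comm_ring_1"
  assumes N: "nuc TYPE('a)" and Q: "fqp_ring TYPE('a)" and inc: "\<not> cmp a b" and ra: "r * a = 0"
  shows "r * b = 0"
proof -
  define I where "I = {r * a + s * b | r s. True}"
  have RP: "rel_projective I I" unfolding I_def by (rule fqp_pair[OF Q inc_neq[OF inc]])
  define X where "X = {p * b | p. \<not> p dvd 1}"
  have inX': "d \<in> X" if "d = p * b" "\<not> p dvd 1" for d p unfolding X_def using that by blast
  have XI: "is_ideal X" unfolding is_ideal_def
  proof (intro conjI ballI allI)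
    show "0 \<in> X" by (rule inX'[of 0 0]) simp_all
  next
    fix x y assume "x \<in> X" "y \<in> X"
    then obtain p q where pq: "x = p * b" "\<not> p dvd 1" "y = q * b" "\<not> q dvd 1" unfolding X_def by blast
    have "\<not> (p + q) dvd 1" using N pq unfolding nuc_def by blast
    moreover have "x + y = (p + q) * b" using pq by (simp add: distrib_right)
    ultimately show "x + y \<in> X" using inX' by blast
  next
    fix c x assume "x \<in> X"
    then obtain p where p: "x = p * b" "\<not> p dvd 1" unfolding X_def by blast
    have "c * x = (c * p) * b" using p by (simp add: mult.assoc)
    then show "c * x \<in> X" using inX' nonunit_mult[OF p(2)] by blast
  qed
  have XsI: "X \<subseteq> I"
  proof
    fix d assume "d \<in> X"
    then obtain p where "d = p * b" unfolding X_def by blast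
    then have "d = 0 * a + p * b" by simp
    then show "d \<in> I" unfolding I_def by blast
  qed
  define co where "co v = (SOME pq. v = fst pq * a + snd pq * b)" for v
  have co: "v = fst (co v) * a + snd (co v) * b" if "v \<in> I" for v
  proof -
    from that obtain p q where "v = p * a + q * b" unfolding I_def by blast
    then have "\<exists>pq. v = fst pq * a + snd pq * b" by (intro exI[of _ "(p, q)"]) simp
    then show ?thesis unfolding co_def by (rule someI_ex)
  qed
  define g where "g v = fst (co v) * b" for v
  have II: "is_ideal I" unfolding I_def using gspan_ideal gspan_pair[OF inc_neq[OF inc]] by metis
  have anz: "a \<noteq> 0" by (rule inc_nz[OF inc])
  have nu: "\<not> e dvd 1" if "e * a = 0" for e
    using unit_cancel[of e a] that anz by blast
  have lmm: "linear_map_mod I I X g" unfolding linear_map_mod_def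
  proof (intro conjI ballI allI)
    fix v assume "v \<in> I"
    have "g v = 0 * a + fst (co v) * b" unfolding g_def by simp
    then show "g v \<in> I" unfolding I_def by blast
  next
    fix x y v w assume vI: "v \<in> I" and wI: "w \<in> I"
    have uI: "x * v + y * w \<in> I" using II vI wI ideal_add ideal_mult by metis
    have d: "(fst (co (x * v + y * w)) - x * fst (co v) - y * fst (co w)) * a
          = (x * snd (co v) + y * snd (co w) - snd (co (x * v + y * w))) * b"
      by (rule pair_decomp[OF co[OF vI] co[OF wI] co[OF uI]])
    have d0: "(fst (co (x * v + y * w)) - x * fst (co v) - y * fst (co w)) * a = 0"
      by (rule L1[OF N Q inc d])
    have e1: "g (x * v + y * w) - (x * g v + y * g w) = (fst (co (x * v + y * w)) - x * fst (co v) - y * fst (co w)) * b"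
      unfolding g_def by (simp add: algebra_simps)
    show "g (x * v + y * w) - (x * g v + y * g w) \<in> X"
      by (rule inX'[OF e1 nu[OF d0]])
  qed
  have "submodule X I" unfolding submodule_def using XI XsI by blast
  then obtain h where hl: "linear_map I I h" and hg: "\<forall>v\<in>I. h v - g v \<in> X"
    using RP lmm unfolding rel_projective_def by blast
  have aI: "a \<in> I" unfolding I_def by (rule CollectI, rule exI[of _ 1], rule exI[of _ 0], simp)
  have hlin: "h (x * v + y * w) = x * h v + y * h w" if "v \<in> I" "w \<in> I" for x y v w
    using hl that unfolding linear_map_def by blast
  have e: "a = fst (co a) * a + snd (co a) * b" by (rule co[OF aI])
  have "(1 - fst (co a)) * a = snd (co a) * b" using e by (simp add: algebra_simps)
  then have "(1 - fst (co a)) * a = 0" by (rule L1[OF N Q inc])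
  then have f: "\<not> (1 - fst (co a)) dvd 1" by (rule nu)
  obtain p where p: "h a - g a = p * b" "\<not> p dvd 1" using hg aI unfolding X_def by blast
  have "\<not> (- (1 - fst (co a))) dvd 1" by (subst minus_dvd_iff) (rule f)
  then have "\<not> (p + - (1 - fst (co a))) dvd 1" using N p(2) unfolding nuc_def by blast
  then have "(1 + (p + - (1 - fst (co a)))) dvd 1" by (rule nuc_unit[OF N])
  then have U: "(p + fst (co a)) dvd 1" by simp
  have ha: "h a = (p + fst (co a)) * b" using p(1) unfolding g_def by (simp add: algebra_simps)
  have "h (r * a + 0 * a) = r * h a + 0 * h a" by (rule hlin[OF aI aI])
  moreover have "h (0 * a + 0 * a) = 0 * h a + 0 * h a" by (rule hlin[OF aI aI])
  ultimately have "r * h a = 0" using ra by simp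
  then have "(p + fst (co a)) * (r * b) = 0" using ha by (simp add: algebra_simps)
  then show ?thesis using unit_cancel[OF U] by blast
qed



locale struc =
  fixes a0 b0 :: "'a::comm_ring_1"
  assumes G1: "\<And>a b r s. \<not> cmp a b \<Longrightarrow> r * a = s * b \<Longrightarrow> r * a = (0::'a)"
    and G2: "\<And>a b r. \<not> cmp a b \<Longrightarrow> r * a = 0 \<Longrightarrow> r * b = (0::'a)"
    and inc0: "\<not> cmp a0 b0"
begin

lemma inc_sq: assumes "\<not> cmp (a::'a) b" shows "a * a = 0"
proof -
  have "b * a = a * b" by (simp add: mult.commute)
  then have "b * a = 0" using G1[OF assms] by blast
  then have "a * b = 0" by (simp add: mult.commute)
  moreover have "\<not> cmp b a" using assms cmp_sym by blast
  ultimately show ?thesis using G2 by blast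
qed

lemma inc_scale: assumes "\<not> cmp a b" "a = c * a1" "b = c * b1" shows "\<not> cmp a1 b1"
proof
  assume "cmp a1 b1"
  then obtain k where "b1 = k * a1 \<or> a1 = k * b1" unfolding cmp_def by blast
  then have "b = k * a \<or> a = k * b" using assms(2,3) by (auto simp: algebra_simps)
  then show False using assms(1) unfolding cmp_def by blast
qed

lemma sq_nil: "x * x = 0 \<Longrightarrow> x \<in> nilradical"
  unfolding nilradical_def by (rule CollectI, rule exI[of _ 2]) (simp add: power2_eq_square)

lemma inc_nil: "\<not> cmp (a::'a) b \<Longrightarrow> a \<in> nilradical"
  using inc_sq sq_nil by blast

lemma one_side:
  assumes "m * m = 0" "cmp x m" "a = m * x ^ Suc j" "a \<noteq> 0"
  shows "\<exists>k. a = k * x ^ Suc (Suc j)"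
proof -
  from assms(2) consider k where "m = k * x" | k where "x = k * m" unfolding cmp_def by blast
  then show ?thesis
  proof cases
    case (1 k)
    then have "a = k * x ^ Suc (Suc j)" using assms(3) by (simp add: algebra_simps)
    then show ?thesis by blast
  next
    case (2 k)
    have "a = m * x * x ^ j" using assms(3) by (simp add: algebra_simps)
    also have "\<dots> = k * (m * m) * x ^ j" using 2 by (simp add: algebra_simps)
    finally show ?thesis using assms(1,4) by simp
  qed
qed

lemma nil_T: assumes "(x::'a) \<in> nilradical" "x \<noteq> 0" shows "\<exists>y. \<not> cmp x y"
proof (rule ccontr)
  assume "\<not> (\<exists>y. \<not> cmp x y)"
  then have C: "\<And>y. cmp x y" by blast
  obtain n where n: "x ^ n = 0" using assms(1) unfolding nilradical_def by blast
  have a0nz: "a0 \<noteq> 0" by (rule inc_nz[OF inc0])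
  have b0nz: "b0 \<noteq> 0" using inc_nz inc0 cmp_sym by blast
  have "\<exists>m m'. a0 = m * x ^ Suc j \<and> b0 = m' * x ^ Suc j" for j
  proof (induction j)
    case 0
    from C[of a0] consider k where "a0 = k * x" | k where "x = k * a0" unfolding cmp_def by blast
    then show ?case
    proof cases
      case (1 k)
      from C[of b0] consider l where "b0 = l * x" | l where "x = l * b0" unfolding cmp_def by blast
      then show ?thesis
      proof cases
        case (1 l) then show ?thesis using \<open>a0 = k * x\<close> by auto
      next
        case (2 l)
        then have "a0 = (k * l) * b0" using \<open>a0 = k * x\<close> by (simp add: mult.assoc)
        then show ?thesis using inc0 unfolding cmp_def by blast
      qed
    next
      case (2 k)
      from C[of b0] consider l where "b0 = l * x" | l where "x = l * b0" unfolding cmp_def by blast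
      then show ?thesis
      proof cases
        case (1 l)
        then have "b0 = (l * k) * a0" using \<open>x = k * a0\<close> by (simp add: mult.assoc)
        then show ?thesis using inc0 unfolding cmp_def by blast
      next
        case (2 l)
        then have "k * a0 = l * b0" using \<open>x = k * a0\<close> by simp
        then have "k * a0 = 0" using G1[OF inc0] by blast
        then show ?thesis using \<open>x = k * a0\<close> assms(2) by simp
      qed
    qed
  next
    case (Suc j)
    then obtain m m' where mm: "a0 = m * x ^ Suc j" "b0 = m' * x ^ Suc j" by blast
    have "\<not> cmp m m'" using inc_scale[OF inc0, of "x ^ Suc j" m m'] mm by (simp add: mult.commute)
    then have "m * m = 0" "m' * m' = 0" using inc_sq cmp_sym by blast+
    obtain k where "a0 = k * x ^ Suc (Suc j)" using one_side[OF \<open>m * m = 0\<close> C mm(1) a0nz] by blast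
    moreover obtain k' where "b0 = k' * x ^ Suc (Suc j)" using one_side[OF \<open>m' * m' = 0\<close> C mm(2) b0nz] by blast
    ultimately show ?case by blast
  qed
  then obtain m where "a0 = m * x ^ Suc n" by blast
  then have "a0 = 0" using n by simp
  then show False using a0nz by simp
qed

lemma nil_sq: assumes "(x::'a) \<in> nilradical" shows "x * x = 0"
proof (cases "x = 0")
  case True then show ?thesis by simp
next
  case False
  then obtain y where "\<not> cmp x y" using nil_T assms by blast
  then show ?thesis by (rule inc_sq)
qed

lemma nil_prod: assumes "(x::'a) \<in> nilradical" "y \<in> nilradical" shows "x * y = 0"
proof (cases "cmp x y")
  case True
  then consider k where "y = k * x" | k where "x = k * y" unfolding cmp_def by blast
  then show ?thesis
  proof cases
    case (1 k) then have "x * y = k * (x * x)" by (simp add: algebra_simps)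
    then show ?thesis using nil_sq[OF assms(1)] by simp
  next
    case (2 k) then have "x * y = k * (y * y)" by (simp add: algebra_simps)
    then show ?thesis using nil_sq[OF assms(2)] by simp
  qed
next
  case False
  have "y * x = x * y" by (simp add: mult.commute)
  then have "y * x = 0" using G1[OF False] by blast
  then show ?thesis by (simp add: mult.commute)
qed

lemma notnil_cmp: assumes "(c::'a) \<notin> nilradical" shows "cmp c y"
  using assms inc_nil by blast

lemma notnil_div: assumes "(c::'a) \<notin> nilradical" "\<not> cmp y z" shows "\<exists>w. y = c * w"
proof -
  from notnil_cmp[OF assms(1), of y] consider k where "y = k * c" | k where "c = k * y"
    unfolding cmp_def by blast
  then show ?thesis
  proof cases
    case (1 k) then show ?thesis by (auto simp: mult.commute)
  next
    case (2 k)
    then have "c * c = (k * k) * (y * y)" by (simp add: algebra_simps)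
    then have "c * c = 0" using inc_sq[OF assms(2)] by simp
    then show ?thesis using sq_nil assms(1) by blast
  qed
qed

lemma nil_ideal: "is_ideal (nilradical :: 'a set)"
  unfolding is_ideal_def
proof (intro conjI ballI allI)
  show "0 \<in> (nilradical :: 'a set)" by (rule sq_nil) simp
next
  fix x y :: 'a assume x: "x \<in> nilradical" and y: "y \<in> nilradical"
  have "(x + y) * (x + y) = x * x + y * y + 2 * (x * y)" by (simp add: algebra_simps mult_2)
  then have "(x + y) * (x + y) = 0" using nil_sq[OF x] nil_sq[OF y] nil_prod[OF x y] by simp
  then show "x + y \<in> nilradical" by (rule sq_nil)
next
  fix a x :: 'a assume x: "x \<in> nilradical"
  have "(a * x) * (a * x) = (a * a) * (x * x)" by (simp add: algebra_simps)
  then have "(a * x) * (a * x) = 0" using nil_sq[OF x] by simp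
  then show "a * x \<in> nilradical" by (rule sq_nil)
qed

lemma one_nil: "(1::'a) \<notin> nilradical"
  unfolding nilradical_def by simp

lemma nil_prime: assumes "(x::'a) * y \<in> nilradical" shows "x \<in> nilradical \<or> y \<in> nilradical"
proof (rule ccontr)
  assume "\<not> (x \<in> nilradical \<or> y \<in> nilradical)"
  then have x: "x \<notin> nilradical" and y: "y \<notin> nilradical" by auto
  have inc0': "\<not> cmp b0 a0" using inc0 cmp_sym by blast
  obtain a1 where a1: "a0 = x * a1" using notnil_div[OF x inc0] by blast
  obtain b1 where b1: "b0 = x * b1" using notnil_div[OF x inc0'] by blast
  have i1: "\<not> cmp a1 b1" by (rule inc_scale[OF inc0 a1 b1])
  have i1': "\<not> cmp b1 a1" using i1 cmp_sym by blast
  obtain a2 where a2: "a1 = y * a2" using notnil_div[OF y i1] by blast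
  obtain b2 where b2: "b1 = y * b2" using notnil_div[OF y i1'] by blast
  have "\<not> cmp a2 b2" by (rule inc_scale[OF i1 a2 b2])
  then have "a2 \<in> nilradical" by (rule inc_nil)
  then have "(x * y) * a2 = 0" using nil_prod assms by blast
  then have "a0 = 0" using a1 a2 by (simp add: mult.assoc)
  then show False using inc_nz[OF inc0] by simp
qed

lemma val: "quotient_valuation_domain (nilradical :: 'a set)"
  unfolding quotient_valuation_domain_def
proof (intro conjI allI impI)
  show "is_ideal (nilradical :: 'a set)" by (rule nil_ideal)
  show "(1::'a) \<notin> nilradical" by (rule one_nil)
  fix x y :: 'a
  show "x * y \<in> nilradical \<Longrightarrow> x \<in> nilradical \<or> y \<in> nilradical" by (rule nil_prime)
  show "(\<exists>c. y - c * x \<in> nilradical) \<or> (\<exists>c. x - c * y \<in> nilradical)"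
  proof (cases "x \<in> nilradical")
    case True
    then have "x - 0 * y \<in> nilradical" by simp
    then show ?thesis by blast
  next
    case False
    then have "cmp x y" by (rule notnil_cmp)
    then consider k where "y = k * x" | k where "x = k * y" unfolding cmp_def by blast
    then show ?thesis
    proof cases
      case (1 k) then have "y - k * x \<in> nilradical" using sq_nil[of "0::'a"] by simp
      then show ?thesis by blast
    next
      case (2 k) then have "x - k * y \<in> nilradical" using sq_nil[of "0::'a"] by simp
      then show ?thesis by blast
    qed
  qed
qed

lemma divis: "divisible_over_quotient (nilradical :: 'a set)"
  unfolding divisible_over_quotient_def
proof (intro allI impI ballI)
  fix r x :: 'a assume r: "r \<notin> nilradical" and x: "x \<in> nilradical"
  show "\<exists>y\<in>nilradical. x = r * y"
  proof (cases "x = 0")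
    case True then show ?thesis using sq_nil[of "0::'a"] by (auto intro!: bexI[of _ 0])
  next
    case False
    then obtain z where xz: "\<not> cmp x z" using nil_T x by blast
    obtain w where w: "x = r * w" using notnil_div[OF r xz] by blast
    obtain w' where w': "z = r * w'" using notnil_div[OF r, of z x] xz cmp_sym by blast
    have "\<not> cmp w w'" by (rule inc_scale[OF xz w w'])
    then have "w \<in> nilradical" by (rule inc_nil)
    then show ?thesis using w by blast
  qed
qed

lemma tfree: "torsionfree_over_quotient (nilradical :: 'a set)"
  unfolding torsionfree_over_quotient_def
proof (intro allI impI ballI)
  fix r x :: 'a assume x: "x \<in> nilradical" and a: "r \<notin> nilradical \<and> r * x = 0"
  then have r: "r \<notin> nilradical" and rx: "r * x = 0" by auto
  show "x = 0"
  proof (rule ccontr)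
    assume xnz: "x \<noteq> 0"
    then obtain z where xz: "\<not> cmp x z" using nil_T x by blast
    have zx: "\<not> cmp z x" using xz cmp_sym by blast
    have znz: "z \<noteq> 0" by (rule inc_nz[OF zx])
    have rz: "r * z = 0" by (rule G2[OF xz rx])
    obtain x1 where x1: "x = r * x1" using notnil_div[OF r xz] by blast
    obtain z1 where z1: "z = r * z1" using notnil_div[OF r zx] by blast
    have i: "\<not> cmp x1 z1" by (rule inc_scale[OF xz x1 z1])
    have "cmp x1 z"
    proof (rule ccontr)
      assume "\<not> cmp x1 z"
      then have "\<not> cmp z x1" using cmp_sym by blast
      then have "r * x1 = 0" by (rule G2[OF _ rz])
      then show False using x1 xnz by simp
    qed
    then consider k where "z = k * x1" | k where "x1 = k * z" unfolding cmp_def by blast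
    then obtain k where k: "z = k * x1"
    proof cases
      case (2 k)
      then have "x = k * (r * z)" using x1 by (simp add: algebra_simps)
      then show ?thesis using rz xnz by simp
    qed blast
    have "cmp z1 x"
    proof (rule ccontr)
      assume "\<not> cmp z1 x"
      then have "\<not> cmp x z1" using cmp_sym by blast
      then have "r * z1 = 0" by (rule G2[OF _ rx])
      then show False using z1 znz by simp
    qed
    then consider k where "x = k * z1" | k where "z1 = k * x" unfolding cmp_def by blast
    then obtain k' where k': "x = k' * z1"
    proof cases
      case (2 k)
      then have "z = k * (r * x)" using z1 by (simp add: algebra_simps)
      then show ?thesis using rx znz by simp
    qed blast
    have "k * x1 = r * z1" using k z1 by simp
    then have "k * x1 = 0" by (rule G1[OF i])
    then show False using k znz by simp
  qed
qed

lemma conclusion: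
  "quotient_valuation_domain (nilradical :: 'a set) \<and>
      (\<forall>x\<in>(nilradical :: 'a set). \<forall>y\<in>nilradical. x * y = 0) \<and>
      divisible_over_quotient (nilradical :: 'a set) \<and>
      torsionfree_over_quotient (nilradical :: 'a set)"
  using val nil_prod divis tfree by blast

end



definition Cnd :: "'a::comm_ring_1 set \<Rightarrow> 'a set \<Rightarrow> bool" where
  "Cnd S I \<longleftrightarrow> (\<forall>c t. (\<forall>s\<in>S. t s \<in> I) \<longrightarrow> (\<Sum>s\<in>S. c s * s) = 0 \<longrightarrow> (\<Sum>s\<in>S. c s * t s) = 0)"

definition minS :: "'a::comm_ring_1 set \<Rightarrow> 'a set \<Rightarrow> bool" where
  "minS S I \<longleftrightarrow> finite S \<and> I = gspan S \<and> (\<forall>S'. finite S' \<and> I = gspan S' \<longrightarrow> card S \<le> card S')"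

lemma fqp_if:
  assumes "\<And>(I::'a::comm_ring_1 set) S. minS S I \<Longrightarrow> Cnd S I"
  shows "fqp_ring TYPE('a)"
  unfolding fqp_ring_def
proof (intro allI impI)
  fix I :: "'a set" assume "is_ideal I \<and> fg_ideal I"
  then obtain S0 where "finite S0 \<and> I = gspan S0" unfolding fg_ideal_iff by blast
  then obtain S where S: "finite S \<and> I = gspan S" "\<forall>S'. finite S' \<and> I = gspan S' \<longrightarrow> card S \<le> card S'"
    using ex_has_least_nat[of "\<lambda>S. finite S \<and> I = gspan S" S0 card] by blast
  then have "minS S I" unfolding minS_def by blast
  then have "Cnd S I" by (rule assms)
  then show "quasi_projective I" using QP[of S I] S(1) unfolding Cnd_def by blast
qed

lemma min_nored: assumes "minS S I" "j \<in> S" shows "j \<notin> gspan (S - {j})"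
proof
  assume j: "j \<in> gspan (S - {j})"
  have fin: "finite S" and I: "I = gspan S" using assms unfolding minS_def by auto
  have "gspan (S - {j}) = I" using gspan_remove[OF fin assms(2) j] I by simp
  then have "card S \<le> card (S - {j})" using assms(1) fin unfolding minS_def by auto
  moreover have "card (S - {j}) < card S" using fin assms(2) by (rule card_Diff1_less)
  ultimately show False by simp
qed

lemma redundant:
  assumes "finite S" "b \<in> S" "b \<noteq> j" "j = k * b"
  shows "j \<in> gspan (S - {j})"
proof -
  have "b \<in> gspan (S - {j})" using assms gspan_mem[of "S - {j}" b] by blast
  then show ?thesis using assms(4) ideal_mult[OF gspan_ideal] by blast
qed

lemma Cnd_small: assumes "S = {} \<or> (\<exists>a. S = {a})" "I = gspan S" shows "Cnd S I"
  using assms(1)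
proof
  assume "S = {}" then show ?thesis unfolding Cnd_def by simp
next
  assume "\<exists>a. S = {a}"
  then obtain a where a: "S = {a}" by blast
  show ?thesis unfolding Cnd_def
  proof (intro allI impI)
    fix c t assume t: "\<forall>s\<in>S. t s \<in> I" and z: "(\<Sum>s\<in>S. c s * s) = 0"
    have "t a \<in> {k * a | k. True}" using t a assms(2) gspan_single by auto
    then obtain k where k: "t a = k * a" by blast
    have "c a * a = 0" using z a by simp
    moreover have "c a * t a = k * (c a * a)" using k by (simp add: algebra_simps)
    ultimately have "c a * t a = 0" by simp
    then show "(\<Sum>s\<in>S. c s * t s) = 0" using a by simp
  qed
qed

lemma two_elems: assumes "\<not> (S = {} \<or> (\<exists>a. S = {a}))" "a \<in> S" shows "\<exists>b\<in>S. b \<noteq> a"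
  using assms by blast

lemma chain_case:
  assumes ch: "chain_ring TYPE('a::comm_ring_1)" and m: "minS S (I::'a set)"
  shows "Cnd S I"
proof (rule Cnd_small)
  show "I = gspan S" using m unfolding minS_def by blast
  have fin: "finite S" using m unfolding minS_def by blast
  show "S = {} \<or> (\<exists>a. S = {a})"
  proof (rule ccontr)
    assume ne: "\<not> (S = {} \<or> (\<exists>a. S = {a}))"
    then obtain a where a: "a \<in> S" by blast
    then obtain b where b: "b \<in> S" "b \<noteq> a" using two_elems[OF ne] by blast
    have "{k * a | k. True} \<subseteq> {k * b | k. True} \<or> {k * b | k. True} \<subseteq> {k * a | k. True}"
      using ch principal_ideal unfolding chain_ring_def by blast
    then show False
    proof
      assume "{k * a | k. True} \<subseteq> {k * b | k. True}"
      then obtain k where "a = k * b" using self_in_principal[of a] by blast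
      then have "a \<in> gspan (S - {a})" using redundant[OF fin b(1)] b(2) by blast
      then show False using min_nored[OF m a] by blast
    next
      assume "{k * b | k. True} \<subseteq> {k * a | k. True}"
      then obtain k where "b = k * a" using self_in_principal[of b] by blast
      then have "b \<in> gspan (S - {b})" using redundant[OF fin a] b(2) by metis
      then show False using min_nored[OF m b(1)] by blast
    qed
  qed
qed



lemma max_coef:
  fixes N :: "'a::comm_ring_1 set"
  assumes V: "quotient_valuation_domain N" and fin: "finite S" and ne: "S \<noteq> {}"
  shows "\<exists>j\<in>S. \<forall>s\<in>S. \<exists>d. c s - d * c j \<in> N"
  using fin ne
proof (induction S rule: finite_ne_induct)
  case (singleton x)
  have "c x - 1 * c x \<in> N" using V unfolding quotient_valuation_domain_def is_ideal_def by simp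
  then show ?case by blast
next
  case (insert x F)
  then obtain j where j: "j \<in> F" "\<forall>s\<in>F. \<exists>d. c s - d * c j \<in> N" by blast
  have NI: "is_ideal N" using V unfolding quotient_valuation_domain_def by blast
  have x0: "c x - 1 * c x \<in> N" using NI unfolding is_ideal_def by simp
  from V have "(\<exists>e. c x - e * c j \<in> N) \<or> (\<exists>e. c j - e * c x \<in> N)"
    unfolding quotient_valuation_domain_def by blast
  then show ?case
  proof
    assume "\<exists>e. c x - e * c j \<in> N"
    then show ?case using j by blast
  next
    assume "\<exists>e. c j - e * c x \<in> N"
    then obtain e where e: "c j - e * c x \<in> N" by blast
    have "\<forall>s\<in>insert x F. \<exists>d. c s - d * c x \<in> N"
    proof
      fix s assume "s \<in> insert x F"
      then show "\<exists>d. c s - d * c x \<in> N"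
      proof
        assume "s = x" then show ?thesis using x0 by blast
      next
        assume "s \<in> F"
        then obtain d where d: "c s - d * c j \<in> N" using j by blast
        have "c s - (d * e) * c x = (c s - d * c j) + d * (c j - e * c x)" by (simp add: algebra_simps)
        moreover have "(c s - d * c j) + d * (c j - e * c x) \<in> N"
          using d e NI ideal_add ideal_mult by metis
        ultimately show ?thesis by metis
      qed
    qed
    then show ?case by blast
  qed
qed

lemma div_or:
  fixes N :: "'a::comm_ring_1 set"
  assumes V: "quotient_valuation_domain N" and P: "\<forall>x\<in>N. \<forall>y\<in>N. x * y = 0"
    and D: "divisible_over_quotient N" and a: "a \<notin> N"
  shows "(\<exists>k. s = k * a) \<or> (\<exists>k. a = k * s)"
proof (cases "s \<in> N")
  case True
  then obtain y where "s = a * y" using D a unfolding divisible_over_quotient_def by blast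
  then show ?thesis by (auto simp: mult.commute)
next
  case False
  from V have "(\<exists>e. s - e * a \<in> N) \<or> (\<exists>e. a - e * s \<in> N)"
    unfolding quotient_valuation_domain_def by blast
  then show ?thesis
  proof
    assume "\<exists>e. s - e * a \<in> N"
    then obtain e where "s - e * a \<in> N" by blast
    then obtain y where "s - e * a = a * y" using D a unfolding divisible_over_quotient_def by blast
    then have "s = (e + y) * a" by (simp add: algebra_simps)
    then show ?thesis by blast
  next
    assume "\<exists>e. a - e * s \<in> N"
    then obtain e where "a - e * s \<in> N" by blast
    then obtain y where y: "y \<in> N" "a - e * s = a * y" using D a unfolding divisible_over_quotient_def by blast
    have yy: "y * y = 0" using P y(1) by blast
    have "a * (1 - y) = e * s" using y(2) by (simp add: algebra_simps)
    then have "a * (1 - y) * (1 + y) = e * s * (1 + y)" by simp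
    moreover have "a * (1 - y) * (1 + y) = a - a * (y * y)" by (simp add: algebra_simps)
    ultimately have "a = ((1 + y) * e) * s" using yy by (simp add: algebra_simps)
    then show ?thesis by blast
  qed
qed

lemma struct_case:
  fixes N :: "'a::comm_ring_1 set"
  assumes V: "quotient_valuation_domain N" and P: "\<forall>x\<in>N. \<forall>y\<in>N. x * y = 0"
    and D: "divisible_over_quotient N" and T: "torsionfree_over_quotient N"
    and m: "minS S (I::'a set)"
  shows "Cnd S I"
proof (cases "S = {} \<or> (\<exists>a. S = {a})")
  case True
  then show ?thesis using Cnd_small m unfolding minS_def by blast
next
  case ne: False
  have fin: "finite S" and I: "I = gspan S" using m unfolding minS_def by auto
  have NI: "is_ideal N" using V unfolding quotient_valuation_domain_def by blast
  have pr: "\<And>x y. x * y \<in> N \<Longrightarrow> x \<in> N \<or> y \<in> N" using V unfolding quotient_valuation_domain_def by blast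
  have SN: "S \<subseteq> N"
  proof
    fix a assume a: "a \<in> S"
    show "a \<in> N"
    proof (rule ccontr)
      assume an: "a \<notin> N"
      obtain b where b: "b \<in> S" "b \<noteq> a" using two_elems[OF ne a] by blast
      from div_or[OF V P D an, of b] show False
      proof
        assume "\<exists>k. b = k * a"
        then obtain k where "b = k * a" by blast
        then have "b \<in> gspan (S - {b})" using redundant[OF fin a] b(2) by metis
        then show False using min_nored[OF m b(1)] by blast
      next
        assume "\<exists>k. a = k * b"
        then obtain k where "a = k * b" by blast
        then have "a \<in> gspan (S - {a})" using redundant[OF fin b(1)] b(2) by blast
        then show False using min_nored[OF m a] by blast
      qed
    qed
  qed
  have IN: "I \<subseteq> N" using I gspan_least[OF NI SN] by simp
  show ?thesis unfolding Cnd_def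
  proof (intro allI impI)
    fix c t assume t: "\<forall>s\<in>S. t s \<in> I" and z: "(\<Sum>s\<in>S. c s * s) = 0"
    show "(\<Sum>s\<in>S. c s * t s) = 0"
    proof (cases "\<forall>s\<in>S. c s \<in> N")
      case True
      have "\<forall>s\<in>S. c s * t s = 0" using True t IN P by blast
      then show ?thesis by simp
    next
      case False
      then obtain a where a: "a \<in> S" "c a \<notin> N" by blast
      have Sne: "S \<noteq> {}" using a by blast
      obtain j where j: "j \<in> S" "\<forall>s\<in>S. \<exists>d. c s - d * c j \<in> N"
        using max_coef[OF V fin Sne, of c] by blast
      obtain d where d: "\<forall>s\<in>S. c s - d s * c j \<in> N" using bchoice[OF j(2)] by blast
      have cj: "c j \<notin> N"
      proof
        assume "c j \<in> N"
        then have "(c a - d a * c j) + d a * c j \<in> N" using d a(1) NI ideal_add ideal_mult by metis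
        then show False using a(2) by simp
      qed
      have "(\<Sum>s\<in>S. c s * s) = (\<Sum>s\<in>S. c j * (d s * s))"
      proof (rule sum.cong)
        fix s assume s: "s \<in> S"
        have "(c s - d s * c j) * s = 0" using P d s SN by blast
        moreover have "c s * s = c j * (d s * s) + (c s - d s * c j) * s" by (simp add: algebra_simps)
        ultimately show "c s * s = c j * (d s * s)" by simp
      qed simp
      also have "\<dots> = c j * (\<Sum>s\<in>S. d s * s)" by (simp add: sum_distrib_left)
      finally have "c j * (\<Sum>s\<in>S. d s * s) = 0" using z by simp
      moreover have "(\<Sum>s\<in>S. d s * s) \<in> N"
        by (rule ideal_sum[OF NI]) (use SN NI ideal_mult in blast)
      ultimately have sd: "(\<Sum>s\<in>S. d s * s) = 0" using T cj unfolding torsionfree_over_quotient_def by blast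
      have "(1 - d j) * c j \<in> N" using d j(1) by (simp add: algebra_simps)
      then have "1 - d j \<in> N" using pr cj by blast
      moreover have "j \<in> N" using SN j(1) by blast
      ultimately have "(1 - d j) * j = 0" using P by blast
      then have jj: "j = d j * j" by (simp add: algebra_simps)
      have "(\<Sum>s\<in>S. d s * s) = d j * j + (\<Sum>s\<in>S - {j}. d s * s)"
        using fin j(1) by (simp add: sum.remove)
      then have "j = (\<Sum>s\<in>S - {j}. (- d s) * s)" using sd jj by (simp add: sum_negf eq_neg_iff_add_eq_0)
      then have "j \<in> gspan (S - {j})" unfolding gspan_def
        by (intro CollectI exI[of _ "\<lambda>s. - d s"]) simp
      then show ?thesis using min_nored[OF m j(1)] by blast
    qed
  qed
qed



theorem theorem4p1:
  assumes "local_ring TYPE('a::comm_ring_1)"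
  shows "fqp_ring TYPE('a) \<longleftrightarrow>
    (chain_ring TYPE('a) \<or>
     (quotient_valuation_domain (nilradical :: 'a set) \<and>
      (\<forall>x\<in>(nilradical :: 'a set). \<forall>y\<in>nilradical. x * y = 0) \<and>
      divisible_over_quotient (nilradical :: 'a set) \<and>
      torsionfree_over_quotient (nilradical :: 'a set)))"
proof
  assume Q: "fqp_ring TYPE('a)"
  have N: "nuc TYPE('a)" by (rule local_nuc[OF assms])
  show "chain_ring TYPE('a) \<or>
     (quotient_valuation_domain (nilradical :: 'a set) \<and>
      (\<forall>x\<in>(nilradical :: 'a set). \<forall>y\<in>nilradical. x * y = 0) \<and>
      divisible_over_quotient (nilradical :: 'a set) \<and>
      torsionfree_over_quotient (nilradical :: 'a set))"
  proof (cases "chain_ring TYPE('a)")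
    case True then show ?thesis by blast
  next
    case False
    then obtain I J :: "'a set" where IJ: "is_ideal I" "is_ideal J" "\<not> I \<subseteq> J" "\<not> J \<subseteq> I"
      unfolding chain_ring_def by blast
    then obtain a0 b0 where ab: "a0 \<in> I" "a0 \<notin> J" "b0 \<in> J" "b0 \<notin> I" by blast
    have inc: "\<not> cmp a0 b0"
    proof
      assume "cmp a0 b0"
      then consider k where "b0 = k * a0" | k where "a0 = k * b0" unfolding cmp_def by blast
      then show False
      proof cases
        case (1 k) then show False using ab IJ ideal_mult by metis
      next
        case (2 k) then show False using ab IJ ideal_mult by metis
      qed
    qed
    interpret st: struc a0 b0
    proof
      show "\<And>a b r s. \<not> cmp a b \<Longrightarrow> r * a = s * b \<Longrightarrow> r * a = (0::'a)"
        using L1[OF N Q] by blast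
      show "\<And>a b r. \<not> cmp a b \<Longrightarrow> r * a = 0 \<Longrightarrow> r * b = (0::'a)"
        using L2[OF N Q] by blast
      show "\<not> cmp a0 b0" by (rule inc)
    qed
    show ?thesis using st.conclusion by blast
  qed
next
  assume H: "chain_ring TYPE('a) \<or>
     (quotient_valuation_domain (nilradical :: 'a set) \<and>
      (\<forall>x\<in>(nilradical :: 'a set). \<forall>y\<in>nilradical. x * y = 0) \<and>
      divisible_over_quotient (nilradical :: 'a set) \<and>
      torsionfree_over_quotient (nilradical :: 'a set))"
  show "fqp_ring TYPE('a)"
  proof (rule fqp_if)
    fix I S :: "'a set" assume m: "minS S I"
    from H show "Cnd S I"
    proof
      assume "chain_ring TYPE('a)" then show ?thesis using chain_case m by blast
    next
      assume "quotient_valuation_domain (nilradical :: 'a set) \<and>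
      (\<forall>x\<in>(nilradical :: 'a set). \<forall>y\<in>nilradical. x * y = 0) \<and>
      divisible_over_quotient (nilradical :: 'a set) \<and>
      torsionfree_over_quotient (nilradical :: 'a set)"
      then show ?thesis using struct_case m by blast
    qed
  qed
qed

end
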